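(* For every $z\in\mathfrak U$ one has $T(z)\neq0$ and $z-\frac1{T(z)}>0$, so that $\tau(z):=\ln\big(z-\frac1{T(z)}\big)$ is real; moreover, whenever $\tau(z)\in(V_{j-1},V_j)$ for some $1\le j\le n$, the quantity $\chi(z)$ is real. In particular, for every such $z\in\mathfrak U$, $(\tau(z),\chi(z))$ is a real point on the frozen boundary.
   Context: Let $V_0<V_1<\dots<V_n$, $\beta_1,\dots,\beta_n\in[-1,1]$, $\beta_0:=-1$, $\beta_{n+1}:=1$, $\beta_i\ne\beta_{i+1}$ for all $i$; $V:[V_0,V_n]\to\mathbb R$ continuous, linear with slope $\beta_i$ on $[V_{i-1},V_i]$. Define $$T(z)=\sum_{i=0}^n\tfrac12(\beta_{i+1}-\beta_i)\frac1{z-e^{V_i}},\qquad \mathfrak U=(-\infty,e^{V_0})\cup(e^{V_n},\infty)\cup\bigcup_{1\le i\le n,\ \beta_i=\pm1}(e^{V_{i-1}},e^{V_i}).$$ For $z\in\mathfrak U$ with $\tau=\tau(z)\in(V_{j-1},V_j)$, define $$\chi(z)=-\sum_{i=1}^{j-1}\tfrac12(1+\beta_i)\operatorname{Ln}\frac{ze^{-V_i}-1}{ze^{-V_{i-1}}-1}-\tfrac12(1+\beta_j)\operatorname{Ln}\frac{ze^{-\tau}-1}{ze^{-V_{j-1}}-1}+\tfrac12(1-\beta_j)\operatorname{Ln}\frac{ze^{-V_j}-1}{ze^{-\tau}-1}+\sum_{i=j+1}^n\tfrac12(1-\beta_i)\operatorname{Ln}\frac{ze^{-V_i}-1}{ze^{-V_{i-1}}-1}-\tfrac12\tau+\tfrac12(V(V_0)+V_0),$$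 where $\operatorname{Ln}$ is the principal logarithm (imaginary part in $(-\pi,\pi]$) and a term whose coefficient is $0$ is taken to be $0$. The frozen boundary is the set of points $(\tau(z),\chi(z))$; these are exactly the $(\tau,\chi)$ for which $S_{\tau,\chi}$ (the function $\int_{V_0}^{\tau}\frac12(1+V')\ln(1-e^{M}/z)dM-\int_\tau^{V_n}\frac12(1-V')\ln(1-e^{-M}z)dM-(\chi-\frac12V(\tau))\ln z$) has a double real critical point. *)

theory Defs
  imports "HOL-Analysis.Analysis"
begin

text \<open>Breakpoints V_0 < ... < V_n are given by Vb :: nat => real, slopes by
  beta :: nat => real (with beta 0 = -1, beta (n+1) = 1), the piecewise linear
  function V by Vf :: real => real.\<close>

definition Tfun :: "nat \<Rightarrow> (nat \<Rightarrow> real) \<Rightarrow> (nat \<Rightarrow> real) \<Rightarrow> real \<Rightarrow> real" where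
  "Tfun n Vb beta z = (\<Sum>i=0..n. (beta (Suc i) - beta i) / 2 * (1 / (z - exp (Vb i))))"

definition frakU :: "nat \<Rightarrow> (nat \<Rightarrow> real) \<Rightarrow> (nat \<Rightarrow> real) \<Rightarrow> real set" where
  "frakU n Vb beta = {..<exp (Vb 0)} \<union> {exp (Vb n)<..} \<union>
     (\<Union>i\<in>{i. 1 \<le> i \<and> i \<le> n \<and> (beta i = 1 \<or> beta i = -1)}. {exp (Vb (i - 1))<..<exp (Vb i)})"

definition taufun :: "nat \<Rightarrow> (nat \<Rightarrow> real) \<Rightarrow> (nat \<Rightarrow> real) \<Rightarrow> real \<Rightarrow> real" where
  "taufun n Vb beta z = ln (z - 1 / Tfun n Vb beta z)"

text \<open>c * Ln w, with the convention that a term with coefficient 0 is 0.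
  Ln is the principal complex logarithm (imaginary part in (-pi, pi]).\<close>
definition cLn :: "real \<Rightarrow> real \<Rightarrow> complex" where
  "cLn c w = (if c = 0 then 0 else complex_of_real c * Ln (complex_of_real w))"

definition ratio :: "real \<Rightarrow> real \<Rightarrow> real \<Rightarrow> real" where
  "ratio z a b = (z * exp (- a) - 1) / (z * exp (- b) - 1)"

text \<open>chi(z), given j with tau(z) in (V_{j-1}, V_j).\<close>
definition chifun :: "nat \<Rightarrow> (nat \<Rightarrow> real) \<Rightarrow> (nat \<Rightarrow> real) \<Rightarrow> (real \<Rightarrow> real) \<Rightarrow> nat \<Rightarrow> real \<Rightarrow> complex" where
  "chifun n Vb beta Vf j z =
    (let t = taufun n Vb beta z in
      - (\<Sum>i\<in>{1..<j}. cLn ((1 + beta i) / 2) (ratio z (Vb i) (Vb (i - 1))))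
      - cLn ((1 + beta j) / 2) (ratio z t (Vb (j - 1)))
      + cLn ((1 - beta j) / 2) (ratio z (Vb j) t)
      + (\<Sum>i\<in>{j<..n}. cLn ((1 - beta i) / 2) (ratio z (Vb i) (Vb (i - 1))))
      - complex_of_real (t / 2) + complex_of_real ((Vf (Vb 0) + Vb 0) / 2))"

end

theory Submission
  imports Defs "HOL-Analysis.Analysis"
begin

lemma abel:
  fixes b f :: "nat \<Rightarrow> real"
  shows "(\<Sum>i=0..n. (b (Suc i) - b i) * f i) = b (Suc n) * f n - b 0 * f 0 - (\<Sum>i=1..n. b i * (f i - f (i-1)))"
proof (induction n)
  case 0 then show ?case by (simp add: algebra_simps)
next
  case (Suc n)
  have "(\<Sum>i=1..Suc n. b i * (f i - f (i-1))) = (\<Sum>i=1..n. b i * (f i - f (i-1))) + b (Suc n) * (f (Suc n) - f n)" by simp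
  then show ?case using Suc by (simp add: algebra_simps)
qed

lemma tele: fixes f :: "nat \<Rightarrow> real" shows "(\<Sum>i=1..n. (f i - f (i-1))) = f n - f 0"
  by (induction n) simp_all

lemma SA: fixes b f :: "nat \<Rightarrow> real"
  assumes "b 0 = -1" "b (Suc n) = 1" and "\<And>i. 1 \<le> i \<Longrightarrow> i \<le> n \<Longrightarrow> b i * (f i - f (i-1)) \<le> f i - f (i-1)"
  shows "f 0 \<le> (\<Sum>i=0..n. (b (Suc i) - b i) / 2 * f i)"
proof -
  have e: "(\<Sum>i=0..n. (b (Suc i) - b i) / 2 * f i) = (\<Sum>i=0..n. (b (Suc i) - b i) * f i) / 2"
    by (simp add: sum_divide_distrib)
  have "(\<Sum>i=1..n. b i * (f i - f (i-1))) \<le> (\<Sum>i=1..n. (f i - f (i-1)))" by (rule sum_mono) (use assms(3) in auto)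
  then show ?thesis unfolding e abel using tele[of f n] assms(1,2) by simp
qed

lemma SA': fixes b f :: "nat \<Rightarrow> real"
  assumes "b 0 = -1" "b (Suc n) = 1" and "\<And>i. 1 \<le> i \<Longrightarrow> i \<le> n \<Longrightarrow> f i - f (i-1) \<le> b i * (f i - f (i-1))"
  shows "(\<Sum>i=0..n. (b (Suc i) - b i) / 2 * f i) \<le> f 0"
proof -
  have e: "(\<Sum>i=0..n. (b (Suc i) - b i) / 2 * f i) = (\<Sum>i=0..n. (b (Suc i) - b i) * f i) / 2"
    by (simp add: sum_divide_distrib)
  have "(\<Sum>i=1..n. (f i - f (i-1))) \<le> (\<Sum>i=1..n. b i * (f i - f (i-1)))" by (rule sum_mono) (use assms(3) in auto)
  then show ?thesis unfolding e abel using tele[of f n] assms(1,2) by simp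
qed

lemma SB: fixes b f :: "nat \<Rightarrow> real"
  assumes "b 0 = -1" "b (Suc n) = 1" and "\<And>i. 1 \<le> i \<Longrightarrow> i \<le> n \<Longrightarrow> -(f i - f (i-1)) \<le> b i * (f i - f (i-1))"
  shows "(\<Sum>i=0..n. (b (Suc i) - b i) / 2 * f i) \<le> f n"
proof -
  have e: "(\<Sum>i=0..n. (b (Suc i) - b i) / 2 * f i) = (\<Sum>i=0..n. (b (Suc i) - b i) * f i) / 2"
    by (simp add: sum_divide_distrib)
  have "(\<Sum>i=1..n. -(f i - f (i-1))) \<le> (\<Sum>i=1..n. b i * (f i - f (i-1)))" by (rule sum_mono) (use assms(3) in auto)
  hence "-(f n - f 0) \<le> (\<Sum>i=1..n. b i * (f i - f (i-1)))" unfolding sum_negf tele .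
  then show ?thesis unfolding e abel using assms(1,2) by simp
qed

lemma sumd: fixes b :: "nat \<Rightarrow> real"
  assumes "b 0 = -1" "b (Suc n) = 1"
  shows "(\<Sum>i=0..n. (b (Suc i) - b i) / 2 * (z * g i - 1)) = z * (\<Sum>i=0..n. (b (Suc i) - b i) / 2 * g i) - 1"
proof -
  have "(\<Sum>i=0..n. (b (Suc i) - b i)) = 2" using sum_Suc_diff[of 0 n b] assms by simp
  hence "(\<Sum>i=0..n. (b (Suc i) - b i) / 2) = 1" by (simp add: sum_divide_distrib[symmetric])
  moreover have "(\<Sum>i=0..n. (b (Suc i) - b i) / 2 * (z * g i - 1)) = z * (\<Sum>i=0..n. (b (Suc i) - b i) / 2 * g i) - (\<Sum>i=0..n. (b (Suc i) - b i) / 2)"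
    by (simp add: sum_subtractf sum_distrib_left right_diff_distrib mult.assoc mult.left_commute)
  ultimately show ?thesis by simp
qed

lemma dpos: fixes x y z :: real assumes "x < y" "z < x \<or> y < z" shows "1/(z-y) - 1/(z-x) > 0"
proof -
  have ne: "z \<noteq> x" "z \<noteq> y" using assms by auto
  have "1/(z-y) - 1/(z-x) = (y-x)/((z-y)*(z-x))" using ne by (simp add: field_simps)
  moreover have "(z-y)*(z-x) > 0" using assms by (auto intro: mult_pos_pos mult_neg_neg)
  ultimately show ?thesis using assms by simp
qed

lemma Im_cLn: "c = 0 \<or> w > 0 \<Longrightarrow> Im (cLn c w) = 0"
  unfolding cLn_def using Ln_of_real by auto

lemma ratio_pos: "(exp a < z \<and> exp b < z) \<or> (z < exp a \<and> z < exp b) \<Longrightarrow> ratio z a b > 0"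
proof -
  have k: "z * exp (-c) - 1 > 0 \<longleftrightarrow> exp c < z" for c
    by (simp add: exp_minus field_simps)
  have k2: "z * exp (-c) - 1 < 0 \<longleftrightarrow> z < exp c" for c
    by (simp add: exp_minus field_simps)
  assume "(exp a < z \<and> exp b < z) \<or> (z < exp a \<and> z < exp b)"
  then show ?thesis unfolding ratio_def using k k2 by (metis divide_pos_pos divide_neg_neg)
qed


lemma mono_le: fixes Vb :: "nat \<Rightarrow> real" and n i j :: nat assumes "\<And>i. 1 \<le> i \<Longrightarrow> i \<le> n \<Longrightarrow> Vb (i - 1) < (Vb i::real)"
  shows "i \<le> j \<Longrightarrow> j \<le> n \<Longrightarrow> Vb i \<le> Vb j"
proof (induction j)
  case 0 then show ?case by simp
next
  case (Suc j)
  show ?case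
  proof (cases "i = Suc j")
    case False
    then have "Vb i \<le> Vb j" using Suc by simp
    moreover have "Vb j < Vb (Suc j)" using assms[of "Suc j"] Suc by simp
    ultimately show ?thesis by simp
  qed simp
qed

lemma mono_lt: fixes Vb :: "nat \<Rightarrow> real" and n i j :: nat assumes "\<And>i. 1 \<le> i \<Longrightarrow> i \<le> n \<Longrightarrow> Vb (i - 1) < (Vb i::real)"
  and "i < j" "j \<le> n" shows "Vb i < Vb j"
proof -
  have "Vb i \<le> Vb (j-1)" using mono_le[where Vb=Vb and n=n and i=i and j="j-1", OF assms(1)] assms by simp
  also have "\<dots> < Vb j" using assms(1)[of j] assms by simp
  finally show ?thesis .
qed

theorem proposition4p1:
  fixes n :: nat and Vb :: "nat \<Rightarrow> real" and beta :: "nat \<Rightarrow> real"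
    and Vf :: "real \<Rightarrow> real" and z :: real
  assumes Vb_mono: "\<And>i. 1 \<le> i \<Longrightarrow> i \<le> n \<Longrightarrow> Vb (i - 1) < Vb i"
    and beta_range: "\<And>i. 1 \<le> i \<Longrightarrow> i \<le> n \<Longrightarrow> -1 \<le> beta i \<and> beta i \<le> 1"
    and beta_0: "beta 0 = -1"
    and beta_last: "beta (Suc n) = 1"
    and beta_ne: "\<And>i. i \<le> n \<Longrightarrow> beta i \<noteq> beta (Suc i)"
    and Vf_lin: "\<And>i x. 1 \<le> i \<Longrightarrow> i \<le> n \<Longrightarrow> Vb (i - 1) \<le> x \<Longrightarrow> x \<le> Vb i \<Longrightarrow>
                   Vf x = Vf (Vb (i - 1)) + beta i * (x - Vb (i - 1))"
    and zU: "z \<in> frakU n Vb beta"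
  shows "Tfun n Vb beta z \<noteq> 0 \<and> z - 1 / Tfun n Vb beta z > 0 \<and>
         (\<forall>j. 1 \<le> j \<and> j \<le> n \<and> Vb (j - 1) < taufun n Vb beta z \<and> taufun n Vb beta z < Vb j
              \<longrightarrow> Im (chifun n Vb beta Vf j z) = 0)"
proof -
  define T where "T = Tfun n Vb beta z"
  define t where "t = taufun n Vb beta z"
  define f where "f i = 1 / (z - exp (Vb i))" for i
  define g where "g i = z * f i - 1" for i
  have Tf: "T = (\<Sum>i=0..n. (beta (Suc i) - beta i) / 2 * f i)" unfolding T_def Tfun_def f_def ..
  have Tg: "(\<Sum>i=0..n. (beta (Suc i) - beta i) / 2 * g i) = z * T - 1"
    unfolding Tf g_def by (rule sumd[OF beta_0 beta_last])
  have le: "i \<le> j \<Longrightarrow> j \<le> n \<Longrightarrow> exp (Vb i) \<le> exp (Vb j)" for i j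
    using mono_le[where Vb=Vb and n=n, OF Vb_mono] by simp
  have lt: "i < j \<Longrightarrow> j \<le> n \<Longrightarrow> exp (Vb i) < exp (Vb j)" for i j
    using mono_lt[where Vb=Vb and n=n, OF Vb_mono] by simp
  have df: "f i - f (i-1) > 0" if "1 \<le> i" "i \<le> n" "z < exp (Vb (i-1)) \<or> exp (Vb i) < z" for i
    unfolding f_def by (rule dpos) (use lt[of "i-1" i] that in auto)
  have dg: "g i - g (i-1) = z * (f i - f (i-1))" for i unfolding g_def by (simp add: algebra_simps)
  have ImP: "Im (cLn c w) = 0" if "c = 0 \<or> w > 0" for c w using Im_cLn that .
  have RP: "Im (cLn c (ratio z x y)) = 0" if "c = 0 \<or> (exp x < z \<and> exp y < z) \<or> (z < exp x \<and> z < exp y)" for c x y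
    using that ratio_pos ImP by metis
  have chi: "Im (chifun n Vb beta Vf j z) = 0" if
     A: "\<And>i. i \<in> {1..<j} \<Longrightarrow> (1 + beta i) / 2 = 0 \<or> (exp (Vb i) < z \<and> exp (Vb (i-1)) < z) \<or> (z < exp (Vb i) \<and> z < exp (Vb (i-1)))"
     and B: "(1 + beta j) / 2 = 0 \<or> (exp t < z \<and> exp (Vb (j-1)) < z) \<or> (z < exp t \<and> z < exp (Vb (j-1)))"
     and C: "(1 - beta j) / 2 = 0 \<or> (exp (Vb j) < z \<and> exp t < z) \<or> (z < exp (Vb j) \<and> z < exp t)"
     and D: "\<And>i. i \<in> {j<..n} \<Longrightarrow> (1 - beta i) / 2 = 0 \<or> (exp (Vb i) < z \<and> exp (Vb (i-1)) < z) \<or> (z < exp (Vb i) \<and> z < exp (Vb (i-1)))"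
     for j
  proof -
    have "(\<Sum>i\<in>{1..<j}. Im (cLn ((1 + beta i) / 2) (ratio z (Vb i) (Vb (i - 1))))) = 0"
      by (rule sum.neutral) (use A RP in blast)
    moreover have "(\<Sum>i\<in>{j<..n}. Im (cLn ((1 - beta i) / 2) (ratio z (Vb i) (Vb (i - 1))))) = 0"
      by (rule sum.neutral) (use D RP in blast)
    moreover have "Im (cLn ((1 + beta j) / 2) (ratio z t (Vb (j - 1)))) = 0" using B RP by blast
    moreover have "Im (cLn ((1 - beta j) / 2) (ratio z (Vb j) t)) = 0" using C RP by blast
    ultimately show ?thesis unfolding chifun_def Let_def t_def[symmetric] by simp
  qed
  have et: "exp t = z - 1 / T" if "z - 1 / T > 0" unfolding t_def taufun_def T_def[symmetric] using that by simp
  have invT: "1 / T < 0" if "T < 0" for T :: real using that by simp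
  have a0pos: "exp (Vb 0) > 0" by simp
  from zU consider (L) "z < exp (Vb 0)" | (R) "exp (Vb n) < z"
    | (G) k where "1 \<le> k" "k \<le> n" "beta k = 1 \<or> beta k = -1" "exp (Vb (k-1)) < z" "z < exp (Vb k)"
    unfolding frakU_def by auto
  then show ?thesis
  proof cases
    case L
    have zlt: "z < exp (Vb i)" if "i \<le> n" for i using L le[of 0 i] that by (meson le0 less_le_trans)
    have dfi: "f i - f (i-1) > 0" if "1 \<le> i" "i \<le> n" for i using df[OF that] zlt[of "i-1"] that by simp
    have "T \<le> f n" unfolding Tf
    proof (rule SB[OF beta_0 beta_last])
      fix i assume i: "1 \<le> i" "i \<le> n"
      have "0 \<le> (beta i + 1) * (f i - f (i-1))" using dfi[OF i] beta_range[OF i] by simp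
      then show "-(f i - f (i-1)) \<le> beta i * (f i - f (i-1))" by (simp add: algebra_simps)
    qed
    moreover have "f n < 0" unfolding f_def using zlt[of n] by simp
    ultimately have Tn: "T < 0" by simp
    have pos: "z - 1 / T > 0"
    proof (cases "z \<le> 0")
      case True
      have "(\<Sum>i=0..n. (beta (Suc i) - beta i) / 2 * g i) \<le> g 0"
      proof (rule SA'[OF beta_0 beta_last])
        fix i assume i: "1 \<le> i" "i \<le> n"
        have "0 \<le> (1 - beta i) * (- z * (f i - f (i-1)))" 
          by (intro mult_nonneg_nonneg) (use dfi[OF i] beta_range[OF i] True in auto)
        then show "g i - g (i-1) \<le> beta i * (g i - g (i-1))" unfolding dg by (simp add: algebra_simps)
      qed
      moreover have "g 0 < 0" unfolding g_def f_def using L by (simp add: field_simps)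
      ultimately have "z * T - 1 < 0" using Tg by simp
      then have "(z * T - 1) / T > 0" using Tn by (simp add: divide_neg_neg)
      then show ?thesis using Tn by (simp add: field_simps)
    next
      case False
      then show ?thesis using invT[OF Tn] by linarith
    qed
    have zt: "z < exp t" using et[OF pos] invT[OF Tn] by linarith
    show ?thesis unfolding T_def[symmetric] t_def[symmetric]
    proof (intro conjI allI impI)
      show "T \<noteq> 0" using Tn by simp
      show "z - 1 / T > 0" by (rule pos)
      fix j assume j: "1 \<le> j \<and> j \<le> n \<and> Vb (j - 1) < t \<and> t < Vb j"
      show "Im (chifun n Vb beta Vf j z) = 0"
        by (rule chi) (use j zlt zt in auto)
    qed
  next
    case R
    have zgt: "exp (Vb i) < z" if "i \<le> n" for i using R le[of i n] that by (meson order_refl le_less_trans)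
    have zpos: "z > 0" using zgt[of 0] a0pos by linarith
    have dfi: "f i - f (i-1) > 0" if "1 \<le> i" "i \<le> n" for i using df[OF that] zgt[of i] that by simp
    have "f 0 \<le> T" unfolding Tf
    proof (rule SA[OF beta_0 beta_last])
      fix i assume i: "1 \<le> i" "i \<le> n"
      have "0 \<le> (1 - beta i) * (f i - f (i-1))" using dfi[OF i] beta_range[OF i] by simp
      then show "beta i * (f i - f (i-1)) \<le> f i - f (i-1)" by (simp add: algebra_simps)
    qed
    moreover have "f 0 > 0" unfolding f_def using zgt[of 0] by simp
    ultimately have Tp: "T > 0" by simp
    have "g 0 \<le> (\<Sum>i=0..n. (beta (Suc i) - beta i) / 2 * g i)"
    proof (rule SA[OF beta_0 beta_last])
      fix i assume i: "1 \<le> i" "i \<le> n"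
      have "0 \<le> (1 - beta i) * (z * (f i - f (i-1)))" using dfi[OF i] beta_range[OF i] zpos by simp
      then show "beta i * (g i - g (i-1)) \<le> g i - g (i-1)" unfolding dg by (simp add: algebra_simps)
    qed
    moreover have "g 0 > 0" unfolding g_def f_def using zgt[of 0] a0pos by (simp add: field_simps)
    ultimately have "z * T - 1 > 0" using Tg by simp
    then have "(z * T - 1) / T > 0" using Tp by simp
    then have pos: "z - 1 / T > 0" using Tp by (simp add: field_simps)
    have zt: "exp t < z" using et[OF pos] Tp by simp
    show ?thesis unfolding T_def[symmetric] t_def[symmetric]
    proof (intro conjI allI impI)
      show "T \<noteq> 0" using Tp by simp
      show "z - 1 / T > 0" by (rule pos)
      fix j assume j: "1 \<le> j \<and> j \<le> n \<and> Vb (j - 1) < t \<and> t < Vb j"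
      show "Im (chifun n Vb beta Vf j z) = 0"
        by (rule chi) (use j zgt zt in auto)
    qed
  next
    case G
    have a0k: "exp (Vb 0) \<le> exp (Vb (k-1))" using le[of 0 "k-1"] G by simp
    have zpos: "z > 0" using a0k a0pos G by linarith
    have z0: "exp (Vb 0) < z" using a0k G(4) by linarith
    have side: "z < exp (Vb (i-1)) \<or> exp (Vb i) < z" if "1 \<le> i" "i \<le> n" "i \<noteq> k" for i
    proof (cases "i < k")
      case True
      then have "exp (Vb i) \<le> exp (Vb (k-1))" using le[of i "k-1"] G by simp
      then show ?thesis using G by linarith
    next
      case False
      then have "exp (Vb k) \<le> exp (Vb (i-1))" using le[of k "i-1"] G that by simp
      then show ?thesis using G by linarith
    qed
    have dfi: "f i - f (i-1) > 0" if "1 \<le> i" "i \<le> n" "i \<noteq> k" for i using df[OF that(1,2) side[OF that]] .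
    from G(3) show ?thesis
    proof
      assume bk: "beta k = 1"
      have "f 0 \<le> T" unfolding Tf
      proof (rule SA[OF beta_0 beta_last])
        fix i assume i: "1 \<le> i" "i \<le> n"
        show "beta i * (f i - f (i-1)) \<le> f i - f (i-1)"
        proof (cases "i = k")
          case False
          have "0 \<le> (1 - beta i) * (f i - f (i-1))" using dfi[OF i False] beta_range[OF i] by simp
          then show ?thesis by (simp add: algebra_simps)
        qed (use bk in simp)
      qed
      moreover have "f 0 > 0" unfolding f_def using z0 by simp
      ultimately have Tp: "T > 0" by simp
      have "g 0 \<le> (\<Sum>i=0..n. (beta (Suc i) - beta i) / 2 * g i)"
      proof (rule SA[OF beta_0 beta_last])
        fix i assume i: "1 \<le> i" "i \<le> n"
        show "beta i * (g i - g (i-1)) \<le> g i - g (i-1)"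
        proof (cases "i = k")
          case False
          have "0 \<le> (1 - beta i) * (z * (f i - f (i-1)))" using dfi[OF i False] beta_range[OF i] zpos by simp
          then show ?thesis unfolding dg by (simp add: algebra_simps)
        qed (use bk in simp)
      qed
      moreover have "g 0 > 0" unfolding g_def f_def using z0 a0pos by (simp add: field_simps)
      ultimately have "z * T - 1 > 0" using Tg by simp
      then have "(z * T - 1) / T > 0" using Tp by simp
      then have pos: "z - 1 / T > 0" using Tp by (simp add: field_simps)
      have zt: "exp t < z" using et[OF pos] Tp by simp
      show ?thesis unfolding T_def[symmetric] t_def[symmetric]
      proof (intro conjI allI impI)
        show "T \<noteq> 0" using Tp by simp
        show "z - 1 / T > 0" by (rule pos)
        fix j assume j: "1 \<le> j \<and> j \<le> n \<and> Vb (j - 1) < t \<and> t < Vb j"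
        have "t < Vb k" using zt G by (metis exp_less_cancel_iff less_trans)
        then have "Vb (j-1) < Vb k" using j by simp
        then have jk: "j \<le> k"
        proof (rule contrapos_pp)
          assume "\<not> j \<le> k"
          then have "k \<le> j-1" "j-1 \<le> n" using j by auto
          then have "Vb k \<le> Vb (j-1)" using mono_le[where Vb=Vb and n=n, OF Vb_mono] by blast
          then show "\<not> Vb (j-1) < Vb k" by simp
        qed
        show "Im (chifun n Vb beta Vf j z) = 0"
        proof (rule chi)
          fix i assume i: "i \<in> {1..<j}"
          have "exp (Vb i) \<le> exp (Vb (k-1))" "exp (Vb (i-1)) \<le> exp (Vb (k-1))"
            using le[of i "k-1"] le[of "i-1" "k-1"] i jk G by auto
          then show "(1 + beta i) / 2 = 0 \<or> (exp (Vb i) < z \<and> exp (Vb (i-1)) < z) \<or> (z < exp (Vb i) \<and> z < exp (Vb (i-1)))"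
            using G by linarith
        next
          have "exp (Vb (j-1)) \<le> exp (Vb (k-1))" using le[of "j-1" "k-1"] jk G by auto
          then show "(1 + beta j) / 2 = 0 \<or> (exp t < z \<and> exp (Vb (j-1)) < z) \<or> (z < exp t \<and> z < exp (Vb (j-1)))"
            using G zt by linarith
        next
          show "(1 - beta j) / 2 = 0 \<or> (exp (Vb j) < z \<and> exp t < z) \<or> (z < exp (Vb j) \<and> z < exp t)"
          proof (cases "j = k")
            case True then show ?thesis using bk by simp
          next
            case False
            then have "exp (Vb j) \<le> exp (Vb (k-1))" using le[of j "k-1"] jk G by auto
            then show ?thesis using G zt by linarith
          qed
        next
          fix i assume i: "i \<in> {j<..n}"
          show "(1 - beta i) / 2 = 0 \<or> (exp (Vb i) < z \<and> exp (Vb (i-1)) < z) \<or> (z < exp (Vb i) \<and> z < exp (Vb (i-1)))"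
          proof (cases "i = k")
            case True then show ?thesis using bk by simp
          next
            case False
            then have "z < exp (Vb (i-1)) \<or> exp (Vb i) < z" using side[of i] i j by auto
            moreover have "exp (Vb (i-1)) < exp (Vb i)" using lt[of "i-1" i] i j by auto
            ultimately show ?thesis by linarith
          qed
        qed
      qed
    next
      assume bk: "beta k = -1"
      have "T \<le> f n" unfolding Tf
      proof (rule SB[OF beta_0 beta_last])
        fix i assume i: "1 \<le> i" "i \<le> n"
        show "-(f i - f (i-1)) \<le> beta i * (f i - f (i-1))"
        proof (cases "i = k")
          case False
          have "0 \<le> (beta i + 1) * (f i - f (i-1))" using dfi[OF i False] beta_range[OF i] by simp
          then show ?thesis by (simp add: algebra_simps)
        qed (use bk in simp)
      qed
      moreover have "f n < 0"
      proof -
        have "exp (Vb k) \<le> exp (Vb n)" using le[of k n] G by simp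
        then have "z < exp (Vb n)" using G by linarith
        then show ?thesis unfolding f_def by simp
      qed
      ultimately have Tn: "T < 0" by simp
      have pos: "z - 1 / T > 0" using invT[OF Tn] zpos by linarith
      have zt: "z < exp t" using et[OF pos] invT[OF Tn] by linarith
      show ?thesis unfolding T_def[symmetric] t_def[symmetric]
      proof (intro conjI allI impI)
        show "T \<noteq> 0" using Tn by simp
        show "z - 1 / T > 0" by (rule pos)
        fix j assume j: "1 \<le> j \<and> j \<le> n \<and> Vb (j - 1) < t \<and> t < Vb j"
        have "Vb (k-1) < t" using zt G by (metis exp_less_cancel_iff less_trans)
        then have "Vb (k-1) < Vb j" using j by simp
        then have jk: "k \<le> j"
        proof (rule contrapos_pp)
          assume "\<not> k \<le> j"
          then have "j \<le> k-1" "k-1 \<le> n" using G by auto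
          then have "Vb j \<le> Vb (k-1)" using mono_le[where Vb=Vb and n=n, OF Vb_mono] by blast
          then show "\<not> Vb (k-1) < Vb j" by simp
        qed
        show "Im (chifun n Vb beta Vf j z) = 0"
        proof (rule chi)
          fix i assume i: "i \<in> {1..<j}"
          show "(1 + beta i) / 2 = 0 \<or> (exp (Vb i) < z \<and> exp (Vb (i-1)) < z) \<or> (z < exp (Vb i) \<and> z < exp (Vb (i-1)))"
          proof (cases "i = k")
            case True then show ?thesis using bk by simp
          next
            case False
            then have "z < exp (Vb (i-1)) \<or> exp (Vb i) < z" using side[of i] i j by auto
            moreover have "exp (Vb (i-1)) < exp (Vb i)" using lt[of "i-1" i] i j by auto
            ultimately show ?thesis by linarith
          qed
        next
          show "(1 + beta j) / 2 = 0 \<or> (exp t < z \<and> exp (Vb (j-1)) < z) \<or> (z < exp t \<and> z < exp (Vb (j-1)))"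
          proof (cases "j = k")
            case True then show ?thesis using bk by simp
          next
            case False
            then have "exp (Vb k) \<le> exp (Vb (j-1))" using le[of k "j-1"] jk j by auto
            then show ?thesis using G zt by linarith
          qed
        next
          have "exp (Vb k) \<le> exp (Vb j)" using le[of k j] jk j by auto
          then show "(1 - beta j) / 2 = 0 \<or> (exp (Vb j) < z \<and> exp t < z) \<or> (z < exp (Vb j) \<and> z < exp t)"
            using G zt by linarith
        next
          fix i assume i: "i \<in> {j<..n}"
          have "exp (Vb k) \<le> exp (Vb (i-1))" "exp (Vb k) \<le> exp (Vb i)"
            using le[of k "i-1"] le[of k i] i jk by auto
          then show "(1 - beta i) / 2 = 0 \<or> (exp (Vb i) < z \<and> exp (Vb (i-1)) < z) \<or> (z < exp (Vb i) \<and> z < exp (Vb (i-1)))"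
            using G by linarith
        qed
      qed
    qed
  qed
qed

end
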